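(* Let $M$ be the $3\times 2$ array of cells (3 columns, 2 rows) whose standard figure $F\subseteq[0,3]\times[0,2]\subseteq\mathbb{R}^2$ is the union of the line segment from $(0,0)$ to $(2,2)$ (an increasing segment passing through the bottom cell of column 1 and the top cell of column 2), the segment from $(2,1)$ to $(3,0)$ (decreasing, in the bottom cell of column 3) and the segment from $(2,1)$ to $(3,2)$ (increasing, in the top cell of column 3). Then a permutation is a simple permutation avoiding both $4312$ and $3142$ if and only if it is a simple permutation lying in $\operatorname{Geom}(M)$.
   Context: A permutation $\pi$ avoids $\sigma$ if no subsequence of $\pi$ is order-isomorphic to $\sigma$. An interval of a permutation $\pi$ is a set of contiguous positions $\{a,a+1,\dots,b\}$ whose values $\{\pi(i)\}$ also form a set of contiguous integers; intervals of size $0$, $1$ and $n$ are trivial, and $\pi$ is simple if all its intervals are trivial. For a figure $F\subseteq\mathbb{R}^2$, $\operatorname{Geom}(M)$ is the set of all permutations obtained as follows: choose finitely many points of $F$, no two on a common horizontal or vertical line, label them $1,\dots,n$ from bottom to top, and read the labels from left to right. (In matrix form, with the top row displayed first, $M=\begin{pmatrix}0&1&1\\1&0&-1\end{pmatrix}$, where $1$ denotes an increasing diagonal segment across the cell, $-1$ a decreasing one, $0$ an empty cell.) *)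

theory Defs
  imports Complex_Main
begin

definition is_perm :: "nat list \<Rightarrow> bool" where
  "is_perm p \<longleftrightarrow> distinct p \<and> set p = {1..length p}"

definition contains :: "nat list \<Rightarrow> nat list \<Rightarrow> bool" where
  "contains p s \<longleftrightarrow> (\<exists>idx :: nat list. length idx = length s \<and> sorted_wrt (<) idx
      \<and> (\<forall>i\<in>set idx. i < length p)
      \<and> (\<forall>i<length s. \<forall>j<length s. (p!(idx!i) < p!(idx!j) \<longleftrightarrow> s!i < s!j)))"

definition avoids :: "nat list \<Rightarrow> nat list \<Rightarrow> bool" where
  "avoids p s \<longleftrightarrow> \<not> contains p s"

text \<open>An interval: contiguous positions {a..b} (nonempty) whose values form a set of
  contiguous integers. The empty interval is trivial anyway.\<close>
definition is_interval :: "nat list \<Rightarrow> nat \<Rightarrow> nat \<Rightarrow> bool" where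
  "is_interval p a b \<longleftrightarrow> a \<le> b \<and> b < length p \<and>
     (\<exists>c. (\<lambda>i. p!i) ` {a..b} = {c..c + (b - a)})"

definition simple_perm :: "nat list \<Rightarrow> bool" where
  "simple_perm p \<longleftrightarrow> (\<forall>a b. is_interval p a b \<longrightarrow>
       card {a..b} = 1 \<or> card {a..b} = length p)"

text \<open>Geom of a figure F: choose n points of F, no two on a common horizontal or vertical
  line, label them 1..n from bottom to top, read the labels from left to right.\<close>
definition Geom :: "(real \<times> real) set \<Rightarrow> nat list set" where
  "Geom F = {p. is_perm p \<and> (\<exists>x y :: nat \<Rightarrow> real.
       (\<forall>i<length p. (x i, y i) \<in> F)
     \<and> (\<forall>i<length p. \<forall>j<length p. i < j \<longrightarrow> x i < x j)
     \<and> (\<forall>i<length p. \<forall>j<length p. i \<noteq> j \<longrightarrow> y i \<noteq> y j)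
     \<and> (\<forall>i<length p. \<forall>j<length p. p!i < p!j \<longleftrightarrow> y i < y j))}"

text \<open>Standard figure of M = ((0,1,1),(1,0,-1)) (top row first).\<close>
definition figM :: "(real \<times> real) set" where
  "figM = {(t, t) | t. 0 \<le> t \<and> t \<le> 2}
        \<union> {(2 + t, 1 - t) | t. 0 \<le> t \<and> t \<le> 1}
        \<union> {(2 + t, 1 + t) | t. 0 \<le> t \<and> t \<le> 1}"

end

theory Submission
  imports Defs
begin


lemma perm_range: "is_perm p \<Longrightarrow> i < length p \<Longrightarrow> 1 \<le> p!i \<and> p!i \<le> length p"
  unfolding is_perm_def by (metis atLeastAtMost_iff nth_mem)

lemma perm_inj: "is_perm p \<Longrightarrow> i < length p \<Longrightarrow> j < length p \<Longrightarrow> p!i = p!j \<Longrightarrow> i = j"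
  unfolding is_perm_def by (simp add: nth_eq_iff_index_eq)

lemma perm_surj: "is_perm p \<Longrightarrow> 1 \<le> v \<Longrightarrow> v \<le> length p \<Longrightarrow> \<exists>i<length p. p!i = v"
  unfolding is_perm_def by (metis atLeastAtMost_iff in_set_conv_nth)

lemma c4312: "a<b \<Longrightarrow> b<c \<Longrightarrow> c<d \<Longrightarrow> d<length p \<Longrightarrow> p!c < p!d \<Longrightarrow> p!d < p!b \<Longrightarrow> p!b < p!a
  \<Longrightarrow> contains p [4,3,1,2]"
  unfolding contains_def
  apply (rule exI[of _ "[a,b,c,d]"])
  by (simp add: less_Suc_eq all_conj_distrib numeral_eq_Suc)

lemma c3142: "a<b \<Longrightarrow> b<c \<Longrightarrow> c<d \<Longrightarrow> d<length p \<Longrightarrow> p!b < p!d \<Longrightarrow> p!d < p!a \<Longrightarrow> p!a < p!c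
  \<Longrightarrow> contains p [3,1,4,2]"
  unfolding contains_def
  apply (rule exI[of _ "[a,b,c,d]"])
  by (simp add: less_Suc_eq all_conj_distrib numeral_eq_Suc)



lemma four: "length idx = 4 \<Longrightarrow> \<exists>a b c d. idx = [a,b,c,d]"
  by (cases idx; cases "tl idx"; cases "tl (tl idx)"; cases "tl (tl (tl idx))"; auto)

lemma contains4E:
  assumes "contains p [s0,s1,s2,s3]"
  obtains a b c d where "a<b" "b<c" "c<d" "d<length p"
    "\<forall>i<4. \<forall>j<4. (p!([a,b,c,d]!i) < p!([a,b,c,d]!j)) = ([s0,s1,s2,s3]!i < [s0,s1,s2,s3]!j)"
proof -
  from assms obtain idx where H0: "length idx = length [s0,s1,s2,s3] \<and> sorted_wrt (<) idx
      \<and> (\<forall>i\<in>set idx. i < length p)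
      \<and> (\<forall>i<length [s0,s1,s2,s3]. \<forall>j<length [s0,s1,s2,s3]. (p!(idx!i) < p!(idx!j)) = ([s0,s1,s2,s3]!i < [s0,s1,s2,s3]!j))"
    unfolding contains_def by (rule exE)
  have l4: "length [s0,s1,s2,s3] = (4::nat)" by simp
  have L: "length idx = 4" using H0 by simp
  have S: "sorted_wrt (<) idx" and B: "\<forall>i\<in>set idx. i < length p" using H0 by auto
  have R: "\<forall>i<4. \<forall>j<4. (p!(idx!i) < p!(idx!j)) = ([s0,s1,s2,s3]!i < [s0,s1,s2,s3]!j)"
    using H0[unfolded l4] by (elim conjE) assumption
  obtain a b c d where idx: "idx = [a,b,c,d]" using four[OF L] by blast
  have o: "a<b" "b<c" "c<d" "d<length p" using S B unfolding idx by simp_all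
  from R have R': "\<forall>i<4. \<forall>j<4. (p!([a,b,c,d]!i) < p!([a,b,c,d]!j)) = ([s0,s1,s2,s3]!i < [s0,s1,s2,s3]!j)"
    unfolding idx .
  show ?thesis by (rule that[OF o R'])
qed
lemma c4312E: assumes "contains p [4,3,1,2]"
  obtains a b c d where "a<b" "b<c" "c<d" "d<length p" "p!c < p!d" "p!d < p!b" "p!b < p!a"
proof -
  obtain a b c d where H: "a<b" "b<c" "c<d" "d<length p"
    "\<forall>i<4. \<forall>j<4. (p!([a,b,c,d]!i) < p!([a,b,c,d]!j)) = ([4,3,1,2::nat]!i < [4,3,1,2::nat]!j)"
    by (rule contains4E[OF assms])
  have "p!c < p!d" apply (insert H(5))
    apply (drule spec[of _ 2]) apply (drule mp) apply simp
    apply (drule spec[of _ 3]) apply (drule mp) apply simp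
    by (simp add: numeral_2_eq_2 numeral_3_eq_3)
  moreover have "p!d < p!b" apply (insert H(5))
    apply (drule spec[of _ 3]) apply (drule mp) apply simp
    apply (drule spec[of _ 1]) apply (drule mp) apply simp
    by (simp add: numeral_2_eq_2 numeral_3_eq_3)
  moreover have "p!b < p!a" apply (insert H(5))
    apply (drule spec[of _ 1]) apply (drule mp) apply simp
    apply (drule spec[of _ 0]) apply (drule mp) apply simp
    by (simp add: numeral_2_eq_2 numeral_3_eq_3)
  ultimately show ?thesis by (rule that[OF H(1-4)])
qed

lemma c3142E: assumes "contains p [3,1,4,2]"
  obtains a b c d where "a<b" "b<c" "c<d" "d<length p" "p!b < p!d" "p!d < p!a" "p!a < p!c"
proof -
  obtain a b c d where H: "a<b" "b<c" "c<d" "d<length p"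
    "\<forall>i<4. \<forall>j<4. (p!([a,b,c,d]!i) < p!([a,b,c,d]!j)) = ([3,1,4,2::nat]!i < [3,1,4,2::nat]!j)"
    by (rule contains4E[OF assms])
  have "p!b < p!d" apply (insert H(5))
    apply (drule spec[of _ 1]) apply (drule mp) apply simp
    apply (drule spec[of _ 3]) apply (drule mp) apply simp
    by (simp add: numeral_2_eq_2 numeral_3_eq_3)
  moreover have "p!d < p!a" apply (insert H(5))
    apply (drule spec[of _ 3]) apply (drule mp) apply simp
    apply (drule spec[of _ 0]) apply (drule mp) apply simp
    by (simp add: numeral_2_eq_2 numeral_3_eq_3)
  moreover have "p!a < p!c" apply (insert H(5))
    apply (drule spec[of _ 0]) apply (drule mp) apply simp
    apply (drule spec[of _ 2]) apply (drule mp) apply simp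
    by (simp add: numeral_2_eq_2 numeral_3_eq_3)
  ultimately show ?thesis by (rule that[OF H(1-4)])
qed



lemma interval_intro:
  assumes P: "is_perm p" and ab: "a \<le> b" "b < length p"
    and ql: "qlo \<in> {a..b}" and qh: "qhi \<in> {a..b}"
    and bnd: "\<forall>i\<in>{a..b}. p!qlo \<le> p!i \<and> p!i \<le> p!qhi"
    and out: "\<forall>k<length p. p!qlo \<le> p!k \<and> p!k \<le> p!qhi \<longrightarrow> a \<le> k \<and> k \<le> b"
  shows "is_interval p a b"
proof -
  let ?f = "\<lambda>i. p!i"
  have img: "?f ` {a..b} = {p!qlo..p!qhi}"
  proof
    show "?f ` {a..b} \<subseteq> {p!qlo..p!qhi}" using bnd by auto
  next
    show "{p!qlo..p!qhi} \<subseteq> ?f ` {a..b}"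
    proof
      fix v assume v: "v \<in> {p!qlo..p!qhi}"
      have "1 \<le> p!qlo" "p!qhi \<le> length p" using perm_range[OF P] ql qh ab by auto
      then obtain k where k: "k < length p" "p!k = v" using perm_surj[OF P, of v] v by auto
      then have "k \<in> {a..b}" using out v by auto
      then show "v \<in> ?f ` {a..b}" using k by auto
    qed
  qed
  have inj: "inj_on ?f {a..b}" using perm_inj[OF P] ab by (auto simp: inj_on_def)
  have c1: "card (?f ` {a..b}) = b + 1 - a" using card_image[OF inj] by simp
  have c2: "card (?f ` {a..b}) = p!qhi + 1 - p!qlo" unfolding img by simp
  have "p!qlo \<le> p!qhi" using bnd ql by simp
  then have "p!qhi = p!qlo + (b - a)" using c1 c2 ab by linarith
  then have "?f ` {a..b} = {p!qlo..p!qlo + (b - a)}" using img by simp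
  then have "\<exists>c. ?f ` {a..b} = {c..c + (b - a)}" by (rule exI)
  then show ?thesis unfolding is_interval_def using ab by (intro conjI)
qed

lemma not_simple:
  assumes "simple_perm p" "is_interval p a b" "a < b" "b + 1 - a < length p"
  shows False
proof -
  have c: "card {a..b} = b + 1 - a" by simp
  have "card {a..b} = 1 \<or> card {a..b} = length p" using assms(1,2) unfolding simple_perm_def by blast
  then show False using c assms(3,4) by linarith
qed




context
  fixes p :: "nat list" and m :: nat
  assumes P: "is_perm p" and S: "simple_perm p"
    and A1: "\<not> contains p [4,3,1,2]" and A2: "\<not> contains p [3,1,4,2]"
    and mn: "m < length p" and pm: "p!m = length p"
begin

lemma rng: "i < length p \<Longrightarrow> 1 \<le> p!i \<and> p!i \<le> length p"
  using perm_range[OF P] by blast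

lemma inj: "i < length p \<Longrightarrow> j < length p \<Longrightarrow> p!i = p!j \<Longrightarrow> i = j"
  using perm_inj[OF P] by blast

lemma ltn: "i < length p \<Longrightarrow> i \<noteq> m \<Longrightarrow> p!i < length p"
  using rng[of i] inj[of i m] mn pm by fastforce

lemma fact3:
  assumes H: "m<i" "i<l" "m<j" "j<l" "l<length p" "p!i < p!l" "p!l < p!j"
  shows False
proof -
  define Q where "Q = (\<lambda>k. m<k \<and> k<l \<and> p!l < p!k)"
  define j0 where "j0 = (LEAST k. Q k)"
  have Qj: "Q j" using H unfolding Q_def by simp
  have "Q j0" unfolding j0_def by (rule LeastI[of Q j, OF Qj])
  then have j0: "m<j0" "j0<l" "p!l < p!j0" unfolding Q_def by auto
  have below: "p!k < p!l" if "m<k" "k<j0" for k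
  proof -
    have "\<not> Q k" using not_less_Least[of k Q] that unfolding j0_def by blast
    then have "p!k \<le> p!l" using that j0 unfolding Q_def by auto
    moreover have "k \<noteq> l" using that j0 by auto
    ultimately show ?thesis using inj[of k l] that j0 H by fastforce
  qed
  have above: "p!l < p!k" if "j0\<le>k" "k<l" for k
  proof (rule ccontr)
    assume "\<not> p!l < p!k"
    moreover have "k \<noteq> l" using that by auto
    ultimately have lt: "p!k < p!l" using inj[of k l] that H by fastforce
    have "k \<noteq> j0" using lt j0 by auto
    then have "j0 < k" using that by auto
    moreover have "p!j0 < p!m" using ltn[of j0] j0 H pm by auto
    ultimately have "contains p [4,3,1,2]"
      using c4312[of m j0 k l p] j0 that lt H by auto
    then show False using A1 by blast
  qed
  have ij0: "i < j0" using above[of i] H by (meson not_less order.asym)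
  define M where "M = Max ((\<lambda>k. p!k) ` {j0..<l})"
  have fin: "finite ((\<lambda>k. p!k) ` {j0..<l})" "(\<lambda>k. p!k) ` {j0..<l} \<noteq> {}" using j0 by auto
  have "M \<in> (\<lambda>k. p!k) ` {j0..<l}" unfolding M_def using Max_in[OF fin] .
  then obtain q where q: "j0 \<le> q" "q < l" "p!q = M" by auto
  have Mge: "p!k \<le> M" if "j0 \<le> k" "k < l" for k
    unfolding M_def using Max_ge[OF fin(1)] that by auto
  have qn: "p!q < length p" using ltn[of q] q j0 H by auto
  have intv: "is_interval p j0 l"
  proof (rule interval_intro[OF P, of j0 l l q])
    show "j0 \<le> l" "l < length p" "l \<in> {j0..l}" "q \<in> {j0..l}" using j0 q H by auto
    show "\<forall>i\<in>{j0..l}. p!l \<le> p!i \<and> p!i \<le> p!q"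
    proof
      fix k assume k: "k \<in> {j0..l}"
      show "p!l \<le> p!k \<and> p!k \<le> p!q"
      proof (cases "k = l")
        case True then show ?thesis using Mge[of j0] j0 q by auto
      next
        case False then show ?thesis using above[of k] Mge[of k] k q by auto
      qed
    qed
    show "\<forall>k<length p. p!l \<le> p!k \<and> p!k \<le> p!q \<longrightarrow> j0 \<le> k \<and> k \<le> l"
    proof (intro allI impI)
      fix k assume k: "k < length p" and kb: "p!l \<le> p!k \<and> p!k \<le> p!q"
      show "j0 \<le> k \<and> k \<le> l"
      proof (cases "k = l \<or> k = q")
        case True then show ?thesis using q by auto
      next
        case False
        then have s1: "p!l < p!k" "p!k < p!q"
          using kb inj[of k l] inj[of k q] k H q by (auto simp: le_less)
        consider "k = m" | "k < m" | "m < k \<and> k < j0" | "j0 \<le> k \<and> k \<le> l" | "l < k" by linarith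
        then show ?thesis
        proof cases
          case 1 then show ?thesis using s1 qn pm by auto
        next
          case 2
          have "contains p [3,1,4,2]"
            using c3142[of k i q l p] 2 H ij0 q s1 by linarith
          then show ?thesis using A2 by blast
        next
          case 3 then show ?thesis using below[of k] s1 by auto
        next
          case 4 then show ?thesis by blast
        next
          case 5
          have "p!q < p!m" using qn pm by simp
          then have "contains p [4,3,1,2]"
            using c4312[of m q l k p] 5 H q j0 s1 k by linarith
          then show ?thesis using A1 by blast
        qed
      qed
    qed
  qed
  show False using not_simple[OF S intv] j0 H by linarith
qed

lemma fact2:
  assumes t: "Suc t < m"
  shows "p!t < p!(Suc t)"
proof (rule ccontr)
  assume "\<not> p!t < p!(Suc t)"
  moreover have "p!t \<noteq> p!(Suc t)" using inj[of t "Suc t"] t mn by auto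
  ultimately have desc: "p!(Suc t) < p!t" by auto
  define cut where "cut = (\<lambda>k. k \<le> m \<and> (\<forall>x<k. \<forall>y. k \<le> y \<and> y < m \<longrightarrow> p!x < p!y))"
  have cut0: "cut 0" unfolding cut_def by simp
  have cutm: "cut m" unfolding cut_def by simp
  have ncut: "\<not> cut (Suc t)"
  proof
    assume "cut (Suc t)"
    then have "p!t < p!(Suc t)" unfolding cut_def using t by simp
    then show False using desc by simp
  qed
  define s where "s = (GREATEST k. k \<le> t \<and> cut k)"
  define e where "e = (LEAST k. Suc t \<le> k \<and> cut k)"
  have s1: "s \<le> t \<and> cut s" unfolding s_def
    by (rule GreatestI_nat[of _ 0 t]) (use cut0 in auto)
  have s2: "k \<le> s" if "k \<le> t" "cut k" for k unfolding s_def
    by (rule Greatest_le_nat[of _ k t]) (use that in auto)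
  have e1: "Suc t \<le> e \<and> cut e" unfolding e_def
    by (rule LeastI[of _ m]) (use cutm t in auto)
  have e2: "e \<le> k" if "Suc t \<le> k" "cut k" for k unfolding e_def
    by (rule Least_le) (use that in auto)
  have et: "Suc (Suc t) \<le> e" using e1 ncut by (metis le_antisym not_less_eq_eq)
  have em: "e \<le> m" using e1 unfolding cut_def by auto
  have cuts: "p!x < p!y" if "x < s" "s \<le> y" "y < m" for x y using s1 that unfolding cut_def by auto
  have cute: "p!x < p!y" if "x < e" "e \<le> y" "y < m" for x y using e1 that unfolding cut_def by auto
  define V where "V = (\<lambda>k. p!k) ` {s..<e}"
  have fin: "finite V" "V \<noteq> {}" unfolding V_def using s1 et by auto
  have "Min V \<in> V" using Min_in[OF fin] .
  then obtain qlo where qlo: "s \<le> qlo" "qlo < e" "p!qlo = Min V" unfolding V_def by auto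
  have "Max V \<in> V" using Max_in[OF fin] .
  then obtain qhi where qhi: "s \<le> qhi" "qhi < e" "p!qhi = Max V" unfolding V_def by auto
  have Vb: "p!qlo \<le> p!k \<and> p!k \<le> p!qhi" if "s \<le> k" "k < e" for k
    using Min_le[OF fin(1)] Max_ge[OF fin(1)] qlo qhi that unfolding V_def by auto
  have intv: "is_interval p s (e - 1)"
  proof (rule interval_intro[OF P, of s "e - 1" qlo qhi])
    show "s \<le> e - 1" "e - 1 < length p" "qlo \<in> {s..e - 1}" "qhi \<in> {s..e - 1}"
      using s1 et em mn qlo qhi by auto
    show "\<forall>i\<in>{s..e - 1}. p!qlo \<le> p!i \<and> p!i \<le> p!qhi" using Vb et by auto
    show "\<forall>k<length p. p!qlo \<le> p!k \<and> p!k \<le> p!qhi \<longrightarrow> s \<le> k \<and> k \<le> e - 1"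
    proof (intro allI impI)
      fix k assume k: "k < length p" and kb: "p!qlo \<le> p!k \<and> p!k \<le> p!qhi"
      consider "k < s" | "s \<le> k \<and> k < e" | "e \<le> k \<and> k < m" | "k = m" | "m < k" by linarith
      then show "s \<le> k \<and> k \<le> e - 1"
      proof cases
        case 1 then show ?thesis using cuts[of k qlo] qlo em kb by auto
      next
        case 2 then show ?thesis by auto
      next
        case 3 then show ?thesis using cute[of qhi k] qhi kb by auto
      next
        case 4 then show ?thesis using ltn[of qhi] qhi em mn pm kb by auto
      next
        case 5
        define v where "v = p!k"
        have vlo: "p!qlo < v" using kb inj[of k qlo] k qlo em mn 5 unfolding v_def by (auto simp: le_less)
        have vhi: "v < p!qhi" using kb inj[of k qhi] k qhi em mn 5 unfolding v_def by (auto simp: le_less)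
        have nv: "p!i \<noteq> v" if "i < m" for i using inj[of i k] that k 5 mn unfolding v_def by auto
        show ?thesis
        proof (cases "\<exists>i j. s \<le> i \<and> i < j \<and> j < e \<and> p!j < v \<and> v < p!i")
          case True
          then obtain i j where ij: "s \<le> i" "i < j" "j < e" "p!j < v" "v < p!i" by blast
          have "p!i < p!m" using ltn[of i] ij em mn pm by auto
          then have "contains p [3,1,4,2]"
            using c3142[of i j m k p] ij em 5 k unfolding v_def by linarith
          then show ?thesis using A2 by blast
        next
          case False
          note noinv = False
          define C where "C = (\<lambda>c. s \<le> c \<and> c < e \<and> v < p!c)"
          define c where "c = (LEAST c. C c)"
          have "C c" unfolding c_def by (rule LeastI[of C qhi]) (use qhi vhi C_def in auto)
          then have c1: "s \<le> c" "c < e" "v < p!c" unfolding C_def by auto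
          have c2: "p!x < v" if "s \<le> x" "x < c" for x
          proof -
            have "\<not> C x" using not_less_Least[of x C] that unfolding c_def by blast
            then have "p!x \<le> v" using that c1 unfolding C_def by auto
            moreover have "p!x \<noteq> v" using nv[of x] that c1 em by auto
            ultimately show ?thesis by auto
          qed
          have cs: "c \<noteq> s"
          proof
            assume "c = s"
            have "qlo \<noteq> s" using vlo c1 \<open>c = s\<close> by auto
            then have "s \<le> s \<and> s < qlo \<and> qlo < e \<and> p!qlo < v \<and> v < p!s"
              using qlo vlo c1 \<open>c = s\<close> by auto
            then show False using noinv by blast
          qed
          have cutc: "cut c" unfolding cut_def
          proof (intro conjI allI impI)
            show "c \<le> m" using c1 em by auto
            fix x y assume xy: "x < c" "c \<le> y \<and> y < m"
            show "p!x < p!y"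
            proof (cases "x < s")
              case True then show ?thesis using cuts[of x y] xy c1 by auto
            next
              case False
              then have px: "p!x < v" using c2[of x] xy by auto
              show ?thesis
              proof (cases "y < e")
                case True
                have "\<not> p!y < v"
                proof
                  assume "p!y < v"
                  then have "y \<noteq> c" using c1 by auto
                  then show False using noinv c1 xy True \<open>p!y < v\<close> by auto
                qed
                then show ?thesis using px by auto
              next
                case False
                then show ?thesis using cute[of x y] xy c1 by auto
              qed
            qed
          qed
          show ?thesis
          proof (cases "c \<le> t")
            case True then show ?thesis using s2[of c] cutc c1 cs by auto
          next
            case False then show ?thesis using e2[of c] cutc c1 by auto
          qed
        qed
      qed
    qed
  qed
  show False using not_simple[OF S intv] s1 et em mn by linarith
qed

lemma prefix_aux: "j < m \<Longrightarrow> i < j \<Longrightarrow> p!i < p!j"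
proof (induction j)
  case 0 then show ?case by simp
next
  case (Suc j)
  have step: "p!j < p!(Suc j)" using fact2[of j] Suc.prems by simp
  show ?case
  proof (cases "i = j")
    case True then show ?thesis using step by simp
  next
    case False
    then have "p!i < p!j" using Suc by simp
    then show ?thesis using step by simp
  qed
qed

lemma prefix_mono: "i < j \<Longrightarrow> j \<le> m \<Longrightarrow> p!i < p!j"
proof -
  assume ij: "i < j" "j \<le> m"
  show ?thesis
  proof (cases "j = m")
    case True then show ?thesis using ltn[of i] ij mn pm by auto
  next
    case False then show ?thesis using prefix_aux ij by simp
  qed
qed

lemma LR: "m < l \<Longrightarrow> l < length p \<Longrightarrow>
   (\<forall>i. m<i \<and> i<l \<longrightarrow> p!i < p!l) \<or> (\<forall>i. m<i \<and> i<l \<longrightarrow> p!l < p!i)"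
proof (rule ccontr)
  assume l: "m < l" "l < length p" and
    H: "\<not> ((\<forall>i. m<i \<and> i<l \<longrightarrow> p!i < p!l) \<or> (\<forall>i. m<i \<and> i<l \<longrightarrow> p!l < p!i))"
  from H obtain i1 where i1: "m<i1" "i1<l" "\<not> p!i1 < p!l" by blast
  from H obtain i2 where i2: "m<i2" "i2<l" "\<not> p!l < p!i2" by blast
  have a: "p!l < p!i1" using i1 inj[of i1 l] l by (auto simp: not_less le_less)
  have b: "p!i2 < p!l" using i2 inj[of i2 l] l by (auto simp: not_less le_less)
  show False using fact3[of i2 l i1] i1 i2 a b l by blast
qed

end



lemma fig1: "0 \<le> t \<Longrightarrow> t \<le> 2 \<Longrightarrow> (t, t) \<in> figM"
  unfolding figM_def by (rule UnI1, rule UnI1) auto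
lemma fig2: "0 \<le> t \<Longrightarrow> t \<le> 1 \<Longrightarrow> (2 + t, 1 - t) \<in> figM"
  unfolding figM_def by (rule UnI1, rule UnI2) auto
lemma fig3: "0 \<le> t \<Longrightarrow> t \<le> 1 \<Longrightarrow> (2 + t, 1 + t) \<in> figM"
  unfolding figM_def by (rule UnI2) auto

lemma div_gap: "(a::real) + 1 \<le> b \<Longrightarrow> N > 0 \<Longrightarrow> a / N + 1 / N \<le> b / N"
  by (simp add: add_divide_distrib[symmetric] divide_right_mono)

context
  fixes p :: "nat list" and m :: nat
  assumes P: "is_perm p"
    and mn: "m < length p" and pm: "p!m = length p"
    and mono: "\<And>i j. i < j \<Longrightarrow> j \<le> m \<Longrightarrow> p!i < p!j"
    and LR: "\<And>l. m < l \<Longrightarrow> l < length p \<Longrightarrow>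
      (\<forall>i. m<i \<and> i<l \<longrightarrow> p!i < p!l) \<or> (\<forall>i. m<i \<and> i<l \<longrightarrow> p!l < p!i)"
begin

lemma ginj: "i < length p \<Longrightarrow> j < length p \<Longrightarrow> p!i = p!j \<Longrightarrow> i = j"
  using perm_inj[OF P] by blast

definition "r0 = p!(Suc m)"
definition "num j = (if p!j \<le> r0 then -(real j - real m) else real j - real m)"
definition "NN = real (length p) + 1"
definition "cpos j = num j / NN"
definition "SS i = cpos ` {j. m<j \<and> j<length p \<and> p!j \<le> p!i}"
definition "Cm i = Max (insert (-1) (SS i))"
definition "yy i = 1 + Cm i + (if i \<le> m then real (p!i) / NN^2 else 0)"
definition "xx i = (if i \<le> m then yy i else 2 + (real i - real m) / NN)"

lemma NN_pos: "NN > 0" unfolding NN_def by simp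

lemma gap_num:
  assumes k: "m<k" "k<length p" and j: "m<j" "j<length p" and kj: "p!k < p!j"
  shows "num k + 1 \<le> num j"
proof (cases "p!k \<le> r0")
  case True
  note kr = True
  show ?thesis
  proof (cases "p!j \<le> r0")
    case True
    have "j < k"
    proof (rule ccontr)
      assume "\<not> j < k"
      moreover have "k \<noteq> j" using kj by auto
      ultimately have kj': "k < j" by auto
      then have "Suc m < j" using k by auto
      from LR[OF j(1) j(2)] show False
      proof
        assume "\<forall>i. m<i \<and> i<j \<longrightarrow> p!i < p!j"
        then have "p!(Suc m) < p!j" using \<open>Suc m < j\<close> by auto
        then show False using True unfolding r0_def by simp
      next
        assume "\<forall>i. m<i \<and> i<j \<longrightarrow> p!j < p!i"
        then have "p!j < p!k" using kj' k by auto
        then show False using kj by simp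
      qed
    qed
    then show ?thesis using True kr unfolding num_def by auto
  next
    case False
    then show ?thesis using kr k j unfolding num_def by auto
  qed
next
  case False
  note kr = False
  then have jr: "\<not> p!j \<le> r0" using kj by auto
  have "k < j"
  proof (rule ccontr)
    assume "\<not> k < j"
    moreover have "k \<noteq> j" using kj by auto
    ultimately have jk: "j < k" by auto
    then have "Suc m < k" using j by auto
    from LR[OF k(1) k(2)] show False
    proof
      assume "\<forall>i. m<i \<and> i<k \<longrightarrow> p!i < p!k"
      then have "p!j < p!k" using jk j by auto
      then show False using kj by simp
    next
      assume "\<forall>i. m<i \<and> i<k \<longrightarrow> p!k < p!i"
      then have "p!k < p!(Suc m)" using \<open>Suc m < k\<close> by auto
      then show False using kr unfolding r0_def by simp
    qed
  qed
  then show ?thesis using kr jr unfolding num_def by auto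
qed

lemma gap: "m<k \<Longrightarrow> k<length p \<Longrightarrow> m<j \<Longrightarrow> j<length p \<Longrightarrow> p!k < p!j \<Longrightarrow> cpos k + 1/NN \<le> cpos j"
  unfolding cpos_def using div_gap[OF gap_num NN_pos] by blast

lemma num_bounds: "m<j \<Longrightarrow> j<length p \<Longrightarrow> -(real (length p) - 1) \<le> num j \<and> num j \<le> real (length p) - 1"
  unfolding num_def by auto

lemma cpos_lower: "m<j \<Longrightarrow> j<length p \<Longrightarrow> -1 + 1/NN \<le> cpos j"
proof -
  assume j: "m<j" "j<length p"
  have "-(real (length p) - 1) \<le> num j" using num_bounds[OF j] by blast
  then have "(-(real (length p) - 1)) / NN \<le> num j / NN" using NN_pos by (simp add: divide_right_mono)
  moreover have "(-(real (length p) - 1)) / NN = -1 + 2/NN" using NN_pos unfolding NN_def by (simp add: field_simps)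
  moreover have "1/NN \<le> 2/NN" using NN_pos by (simp add: divide_right_mono)
  ultimately show ?thesis unfolding cpos_def by linarith
qed

lemma cpos_upper: "m<j \<Longrightarrow> j<length p \<Longrightarrow> cpos j \<le> (real (length p) - 1) / NN"
  unfolding cpos_def using num_bounds NN_pos by (simp add: divide_right_mono)

lemma SS_fin: "finite (insert (-1) (SS i))" unfolding SS_def by simp

lemma Cm_ge: "-1 \<le> Cm i" unfolding Cm_def using Max_ge[OF SS_fin] by simp

lemma Cm_le: "Cm i \<le> (real (length p) - 1) / NN"
  unfolding Cm_def
proof (subst Max_le_iff[OF SS_fin], simp, intro ballI)
  fix a assume "a \<in> insert (-1) (SS i)"
  then show "a \<le> (real (length p) - 1) / NN"
  proof
    assume "a = -1"
    have "0 \<le> (real (length p) - 1) / NN" using NN_pos mn by simp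
    then show ?thesis using \<open>a = -1\<close> by linarith
  next
    assume "a \<in> SS i" then show ?thesis unfolding SS_def using cpos_upper by auto
  qed
qed

lemma Cm_less: "m<j \<Longrightarrow> j<length p \<Longrightarrow> p!i < p!j \<Longrightarrow> Cm i \<le> cpos j - 1/NN"
  unfolding Cm_def
proof (subst Max_le_iff[OF SS_fin], simp, intro ballI)
  fix a assume j: "m<j" "j<length p" "p!i < p!j" and a_in: "a \<in> insert (-1) (SS i)"
  from a_in show "a \<le> cpos j - 1/NN"
  proof
    assume "a = -1"
    have "-1 + 2/NN \<le> cpos j"
    proof -
      have "-(real (length p) - 1) \<le> num j" using num_bounds j by blast
      then have "(-(real (length p) - 1)) / NN \<le> num j / NN" using NN_pos by (simp add: divide_right_mono)
      moreover have "(-(real (length p) - 1)) / NN = -1 + 2/NN" using NN_pos unfolding NN_def by (simp add: field_simps)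
      ultimately show ?thesis unfolding cpos_def by linarith
    qed
    moreover have "1/NN \<le> 2/NN" using NN_pos by (simp add: divide_right_mono)
    ultimately show ?thesis using \<open>a = -1\<close> by linarith
  next
    assume "a \<in> SS i"
    then obtain k where k: "m<k" "k<length p" "p!k \<le> p!i" "a = cpos k" unfolding SS_def by auto
    then show ?thesis using gap[of k j] j by force
  qed
qed

lemma Cm_R: "m<i \<Longrightarrow> i<length p \<Longrightarrow> Cm i = cpos i"
proof -
  assume i: "m<i" "i<length p"
  have mem: "cpos i \<in> insert (-1) (SS i)" unfolding SS_def using i by auto
  have "Cm i \<le> cpos i" unfolding Cm_def
  proof (subst Max_le_iff[OF SS_fin], simp, intro ballI)
    fix a assume "a \<in> insert (-1) (SS i)"
    then show "a \<le> cpos i"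
    proof
      assume "a = -1" then show ?thesis using cpos_lower[OF i] NN_pos by (smt (verit) divide_pos_pos)
    next
      assume "a \<in> SS i"
      then obtain k where k: "m<k" "k<length p" "p!k \<le> p!i" "a = cpos k" unfolding SS_def by auto
      show ?thesis
      proof (cases "k = i")
        case True then show ?thesis using k by simp
      next
        case False
        then have "p!k < p!i" using k ginj[of k i] i by (auto simp: le_less)
        then show ?thesis using gap[of k i] k i NN_pos by (smt (verit) divide_pos_pos)
      qed
    qed
  qed
  moreover have "cpos i \<le> Cm i" unfolding Cm_def using Max_ge[OF SS_fin mem] .
  ultimately show ?thesis by simp
qed

lemma Cm_mono: "p!i \<le> p!j \<Longrightarrow> Cm i \<le> Cm j"
  unfolding Cm_def
  by (rule Max_mono[OF _ _ SS_fin]) (auto simp: SS_def)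

lemma small: "real (p!i) / NN^2 \<le> 1 / NN" if "i < length p"
proof -
  have "p!i \<le> length p" using perm_range[OF P that] by simp
  then have "real (p!i) \<le> NN" unfolding NN_def by simp
  then have "real (p!i) / NN^2 \<le> NN / NN^2" using NN_pos by (simp add: divide_right_mono)
  also have "NN / NN^2 = 1 / NN" using NN_pos by (simp add: power2_eq_square)
  finally show ?thesis .
qed

lemma small_strict: "real (p!i) / NN^2 < 1 / NN" if "i < length p"
proof -
  have "p!i \<le> length p" using perm_range[OF P that] by simp
  then have "real (p!i) < NN" unfolding NN_def by simp
  then have "real (p!i) / NN^2 < NN / NN^2" using NN_pos by (simp add: divide_strict_right_mono)
  also have "NN / NN^2 = 1 / NN" using NN_pos by (simp add: power2_eq_square)
  finally show ?thesis .
qed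

lemma ymono: "i < length p \<Longrightarrow> j < length p \<Longrightarrow> p!i < p!j \<Longrightarrow> yy i < yy j"
proof -
  assume i: "i < length p" and j: "j < length p" and ij: "p!i < p!j"
  have t_i: "(if i \<le> m then real (p!i) / NN^2 else 0) < 1 / NN"
    using small_strict[OF i] NN_pos by auto
  show ?thesis
  proof (cases "j \<le> m")
    case True
    have "Cm i \<le> Cm j" using Cm_mono ij by simp
    moreover have "(if i \<le> m then real (p!i) / NN^2 else 0) < real (p!j) / NN^2"
    proof -
      have "1 \<le> p!j" using perm_range[OF P j] by simp
      then have "0 < real (p!j) / NN^2" using NN_pos by simp
      moreover have "real (p!i) / NN^2 < real (p!j) / NN^2" using ij NN_pos by (simp add: divide_strict_right_mono)
      ultimately show ?thesis by auto
    qed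
    ultimately show ?thesis unfolding yy_def using True by simp
  next
    case False
    then have "Cm i \<le> cpos j - 1/NN" using Cm_less[of j i] j ij by simp
    moreover have "Cm j = cpos j" using Cm_R[of j] False j by simp
    ultimately show ?thesis unfolding yy_def using False t_i by simp
  qed
qed

lemma yrange: "i \<le> m \<Longrightarrow> 0 \<le> yy i \<and> yy i \<le> 2"
proof -
  assume im: "i \<le> m"
  then have i: "i < length p" using mn by simp
  have "-1 \<le> Cm i" by (rule Cm_ge)
  moreover have "0 \<le> real (p!i) / NN^2" using NN_pos by simp
  moreover have "Cm i \<le> (real (length p) - 1) / NN" by (rule Cm_le)
  moreover have "real (p!i) / NN^2 \<le> 1 / NN" using small[OF i] .
  moreover have "(real (length p) - 1) / NN + 1 / NN \<le> 1"
  proof -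
    have "(real (length p) - 1) / NN + 1 / NN = real (length p) / NN" by (simp add: add_divide_distrib[symmetric])
    also have "\<dots> \<le> 1" using NN_pos unfolding NN_def by simp
    finally show ?thesis .
  qed
  ultimately show ?thesis unfolding yy_def using im by simp
qed

lemma in_geom: "p \<in> Geom figM"
  unfolding Geom_def
proof (rule CollectI, rule conjI, rule P, rule exI[of _ xx], rule exI[of _ yy], intro conjI)
  show "\<forall>i<length p. (xx i, yy i) \<in> figM"
  proof (intro allI impI)
    fix i assume i: "i < length p"
    show "(xx i, yy i) \<in> figM"
    proof (cases "i \<le> m")
      case True then show ?thesis unfolding xx_def using yrange[OF True] fig1 by simp
    next
      case False
      define t where "t = (real i - real m) / NN"
      have t0: "0 \<le> t" using False NN_pos unfolding t_def by simp
      have "real i - real m \<le> NN" using i unfolding NN_def by simp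
      then have t1: "t \<le> 1" using NN_pos unfolding t_def by simp
      have x: "xx i = 2 + t" unfolding xx_def t_def using False by simp
      have y: "yy i = 1 + cpos i" unfolding yy_def using Cm_R[of i] False i by simp
      show ?thesis
      proof (cases "p!i \<le> r0")
        case True
        then have "yy i = 1 - t" unfolding y cpos_def num_def t_def by (simp add: minus_divide_left)
        then show ?thesis using x fig2[OF t0 t1] by simp
      next
        case False
        then have "yy i = 1 + t" unfolding y cpos_def num_def t_def by simp
        then show ?thesis using x fig3[OF t0 t1] by simp
      qed
    qed
  qed
  show "\<forall>i<length p. \<forall>j<length p. i < j \<longrightarrow> xx i < xx j"
  proof (intro allI impI)
    fix i j assume i: "i < length p" and j: "j < length p" and ij: "i < j"
    show "xx i < xx j"
    proof (cases "j \<le> m")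
      case True
      then have "yy i < yy j" using ymono[OF i j mono[OF ij True]] by simp
      then show ?thesis unfolding xx_def using True ij by simp
    next
      case False
      note jm = False
      show ?thesis
      proof (cases "i \<le> m")
        case True
        have "0 < (real j - real m) / NN" using jm NN_pos by simp
        then show ?thesis unfolding xx_def using True jm yrange[OF True] by simp
      next
        case False
        have "(real i - real m) / NN < (real j - real m) / NN" using ij NN_pos by (simp add: divide_strict_right_mono)
        then show ?thesis unfolding xx_def using False jm by simp
      qed
    qed
  qed
  show "\<forall>i<length p. \<forall>j<length p. i \<noteq> j \<longrightarrow> yy i \<noteq> yy j"
  proof (intro allI impI)
    fix i j assume i: "i < length p" and j: "j < length p" and ij: "i \<noteq> j"
    have "p!i \<noteq> p!j" using ginj[OF i j] ij by auto
    then have "p!i < p!j \<or> p!j < p!i" by auto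
    then show "yy i \<noteq> yy j" using ymono[OF i j] ymono[OF j i] by auto
  qed
  show "\<forall>i<length p. \<forall>j<length p. (p!i < p!j) = (yy i < yy j)"
  proof (intro allI impI)
    fix i j assume i: "i < length p" and j: "j < length p"
    show "(p!i < p!j) = (yy i < yy j)"
    proof
      assume "p!i < p!j" then show "yy i < yy j" using ymono[OF i j] by simp
    next
      assume y: "yy i < yy j"
      show "p!i < p!j"
      proof (rule ccontr)
        assume "\<not> p!i < p!j"
        then have "p!j < p!i \<or> p!j = p!i" by auto
        then show False
        proof
          assume "p!j < p!i" then show False using ymono[OF j i] y by simp
        next
          assume "p!j = p!i" then have "j = i" using ginj[OF j i] by simp
          then show False using y by simp
        qed
      qed
    qed
  qed
qed

end



lemma fig_char: "(u, v) \<in> figM \<Longrightarrow>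
  (v = u \<and> 0 \<le> u \<and> u \<le> 2) \<or> (v = 3 - u \<and> 2 \<le> u \<and> u \<le> 3) \<or> (v = u - 1 \<and> 2 \<le> u \<and> u \<le> 3)"
  unfolding figM_def by auto

definition "figP u v \<longleftrightarrow> (v = u \<and> 0 \<le> u \<and> u \<le> 2) \<or> (v = 3 - u \<and> 2 \<le> u \<and> u \<le> 3) \<or> (v = u - 1 \<and> 2 \<le> u \<and> u \<le> (3::real))"

lemma real4312: "figP xa ya \<Longrightarrow> figP xb yb \<Longrightarrow> figP xc yc \<Longrightarrow> figP xd yd \<Longrightarrow>
  xa < xb \<Longrightarrow> xb < xc \<Longrightarrow> xc < xd \<Longrightarrow> yc < yd \<Longrightarrow> yd < yb \<Longrightarrow> yb < ya \<Longrightarrow> False"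
  unfolding figP_def by (elim disjE conjE; linarith)

lemma real3142: "figP xa ya \<Longrightarrow> figP xb yb \<Longrightarrow> figP xc yc \<Longrightarrow> figP xd yd \<Longrightarrow>
  xa < xb \<Longrightarrow> xb < xc \<Longrightarrow> xc < xd \<Longrightarrow> yb < yd \<Longrightarrow> yd < ya \<Longrightarrow> ya < yc \<Longrightarrow> False"
  unfolding figP_def by (elim disjE conjE; linarith)

lemma geom_avoid:
  assumes G: "p \<in> Geom figM"
  shows "\<not> contains p [4,3,1,2] \<and> \<not> contains p [3,1,4,2]"
proof -
  from G obtain x y :: "nat \<Rightarrow> real" where
    F: "\<forall>i<length p. (x i, y i) \<in> figM" and
    X: "\<forall>i<length p. \<forall>j<length p. i < j \<longrightarrow> x i < x j" and
    Y: "\<forall>i<length p. \<forall>j<length p. p!i < p!j \<longleftrightarrow> y i < y j"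
    unfolding Geom_def by blast
  have FP: "figP (x i) (y i)" if "i < length p" for i
    using fig_char F that unfolding figP_def by blast
  show ?thesis
  proof
    show "\<not> contains p [4,3,1,2]"
    proof
      assume "contains p [4,3,1,2]"
      then obtain a b c d where o: "a<b" "b<c" "c<d" "d<length p" "p!c < p!d" "p!d < p!b" "p!b < p!a"
        by (rule c4312E)
      have l: "a < length p" "b < length p" "c < length p" using o by auto
      show False
        apply (rule real4312[OF FP[OF l(1)] FP[OF l(2)] FP[OF l(3)] FP[OF o(4)]])
        using X Y o l by auto
    qed
  next
    show "\<not> contains p [3,1,4,2]"
    proof
      assume "contains p [3,1,4,2]"
      then obtain a b c d where o: "a<b" "b<c" "c<d" "d<length p" "p!b < p!d" "p!d < p!a" "p!a < p!c"
        by (rule c3142E)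
      have l: "a < length p" "b < length p" "c < length p" using o by auto
      show False
        apply (rule real3142[OF FP[OF l(1)] FP[OF l(2)] FP[OF l(3)] FP[OF o(4)]])
        using X Y o l by auto
    qed
  qed
qed

theorem proposition4p1:
  fixes p :: "nat list"
  assumes "is_perm p"
  shows "(simple_perm p \<and> avoids p [4,3,1,2] \<and> avoids p [3,1,4,2])
         \<longleftrightarrow> (simple_perm p \<and> p \<in> Geom figM)"
proof
  assume "simple_perm p \<and> p \<in> Geom figM"
  then show "simple_perm p \<and> avoids p [4,3,1,2] \<and> avoids p [3,1,4,2]"
    using geom_avoid unfolding avoids_def by blast
next
  assume H: "simple_perm p \<and> avoids p [4,3,1,2] \<and> avoids p [3,1,4,2]"
  then have S: "simple_perm p" and A1: "\<not> contains p [4,3,1,2]" and A2: "\<not> contains p [3,1,4,2]"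
    unfolding avoids_def by auto
  show "simple_perm p \<and> p \<in> Geom figM"
  proof (cases "p = []")
    case True
    then show ?thesis using S assms unfolding Geom_def by simp
  next
    case False
    then have "length p \<in> set p" using assms unfolding is_perm_def by (simp add: Suc_le_eq)
    then obtain m where mn: "m < length p" and pm: "p!m = length p" by (auto simp: in_set_conv_nth)
    have mono: "\<And>i j. i < j \<Longrightarrow> j \<le> m \<Longrightarrow> p!i < p!j"
      using prefix_mono[OF assms S A1 A2 mn pm] by blast
    have LR': "\<And>l. m < l \<Longrightarrow> l < length p \<Longrightarrow>
      (\<forall>i. m<i \<and> i<l \<longrightarrow> p!i < p!l) \<or> (\<forall>i. m<i \<and> i<l \<longrightarrow> p!l < p!i)"
      using LR[OF assms S A1 A2 mn pm] by blast
    show ?thesis using S in_geom[OF assms mn pm mono LR'] by blast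
  qed
qed


end
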